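(* Let $J:=\operatorname{conv}\{\mathbf{v}_0,\mathbf{v}_1,\dots,\mathbf{v}_d\}\subset\mathbb{R}^d_{\ge0}\setminus\{\mathbf{0}\}$ be a $d$-simplex, $\mathbf{c}\in\mathbb{R}^d$, and $f(\mathbf{x}):=e^{\mathbf{c}^\top\mathbf{x}}-1$, and suppose $\mathbf{c}^\top\mathbf{v}_0-\mathbf{c}^\top\mathbf{v}_j=u\neq0$ for $j=1,\dots,d$. Then $$\operatorname{vol}(P(f,J))=\frac{d!\operatorname{vol}(J)}{(d+2)!}\bigl(e^{\mathbf{c}^\top\mathbf{v}_0}+de^{\mathbf{c}^\top\mathbf{v}_0-u}\bigr)-\frac{d!\operatorname{vol}(J)}{d+2}\cdot\frac{e^{\mathbf{c}^\top\mathbf{v}_0-u}}{u^d}\left(e^u-\sum_{j=0}^{d-1}\frac{u^j}{j!}\right),$$ and $$\begin{aligned}\operatorname{vol}(P^0(f,J))=&\ \frac{d!\operatorname{vol}(J)}{(d+2)!}\bigl(e^{\mathbf{c}^\top\mathbf{v}_0}+de^{\mathbf{c}^\top\mathbf{v}_0-u}+1\bigr)-d!\operatorname{vol}(J)\frac{e^{\mathbf{c}^\top\mathbf{v}_0-u}}{(\mathbf{c}^\top\mathbf{v}_0)u^d}\left(e^u-\sum_{j=0}^{d-1}\frac{u^j}{j!}\right)\\&+d!\operatorname{vol}(J)\frac{e^{\mathbf{c}^\top\mathbf{v}_0-u}}{(\mathbf{c}^\top\mathbf{v}_0)\,[-(\mathbf{c}^\top\mathbf{v}_0-u)]^d}\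left(e^{-(\mathbf{c}^\top\mathbf{v}_0-u)}-\sum_{j=0}^{d-1}\frac{[-(\mathbf{c}^\top\mathbf{v}_0-u)]^j}{j!}\right).\end{aligned}$$
   Context: $\operatorname{vol}(J)$ is the $d$-dimensional Lebesgue measure of $J$, and $\operatorname{vol}$ of the relaxations is $(d+2)$-dimensional Lebesgue measure. Let $\mu$ be the unique affine function agreeing with $f$ at the vertices of $J$ and $\mu(\mathbf{x},z):=z\mu(\mathbf{x}/z)$ (extended linearly in $(\mathbf{x},z)$). For $z\ge0$, $z\cdot J:=\{z\mathbf{x}:\mathbf{x}\in J\}$. Perspective relaxation: $P(f,J):=\operatorname{cl}\{(\mathbf{x},y,z)\in\mathbb{R}^d\times\mathbb{R}\times\mathbb{R}:\mu(\mathbf{x},z)\ge y\ge zf(\mathbf{x}/z),\ \mathbf{x}\in z\cdot J,\ 1\ge z>0\}$. Naive relaxation: $P^0(f,J):=\{(\mathbf{x},y,z)\in\mathbb{R}^d\times\mathbb{R}\times\mathbb{R}:\mu(\mathbf{x},z)\ge y\ge f(\mathbf{x}),\ \mathbf{x}\in z\cdot J,\ 1\ge z\ge0\}$. *)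

theory Defs
  imports "HOL-Analysis.Analysis"
begin

definition simplex_of :: "(nat \<Rightarrow> real^'n) \<Rightarrow> nat \<Rightarrow> (real^'n) set" where
  "simplex_of v d = convex hull (v ` {0..d})"

definition affine_interp :: "(real^'n \<Rightarrow> real) \<Rightarrow> (nat \<Rightarrow> real^'n) \<Rightarrow> nat \<Rightarrow> real^'n \<Rightarrow> real" where
  "affine_interp f v d = (THE g. (\<exists>a b. g = (\<lambda>x. a \<bullet> x + b)) \<and> (\<forall>i\<in>{0..d}. g (v i) = f (v i)))"

text \<open>Its homogenization mu(x,z) = z mu(x/z), extended linearly in (x,z):
  for mu(x) = a.x + b this is a.x + b z.\<close>
definition homog :: "(real^'n \<Rightarrow> real) \<Rightarrow> real^'n \<Rightarrow> real \<Rightarrow> real" where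
  "homog g x z = (g x - g 0) + z * g 0"

definition persp_relax :: "(real^'n \<Rightarrow> real) \<Rightarrow> (nat \<Rightarrow> real^'n) \<Rightarrow> nat \<Rightarrow> ((real^'n) \<times> real \<times> real) set" where
  "persp_relax f v d = closure {(x, y, z). homog (affine_interp f v d) x z \<ge> y \<and> y \<ge> z * f (inverse z *\<^sub>R x)
      \<and> x \<in> (\<lambda>p. z *\<^sub>R p) ` simplex_of v d \<and> 1 \<ge> z \<and> z > 0}"

definition naive_relax :: "(real^'n \<Rightarrow> real) \<Rightarrow> (nat \<Rightarrow> real^'n) \<Rightarrow> nat \<Rightarrow> ((real^'n) \<times> real \<times> real) set" where
  "naive_relax f v d = {(x, y, z). homog (affine_interp f v d) x z \<ge> y \<and> y \<ge> f x
      \<and> x \<in> (\<lambda>p. z *\<^sub>R p) ` simplex_of v d \<and> 1 \<ge> z \<and> z \<ge> 0}"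

end

theory Submission
  imports Defs "HOL-Analysis.Analysis"
begin

definition Qs :: "nat \<Rightarrow> real \<Rightarrow> real" where
  "Qs m x = (\<Sum>j<m. x ^ j / fact j)"

lemma Qs_Suc: "Qs (Suc m) x = Qs m x + x ^ m / fact m"
  by (simp add: Qs_def)

lemma Qs_0: "Qs (Suc m) 0 = 1"
  by (induction m) (auto simp: Qs_def)

lemma Qs_deriv: "((Qs (Suc m)) has_real_derivative Qs m x) (at x)"
proof (induction m arbitrary: x)
  case 0
  show ?case by (simp add: Qs_def)
next
  case (Suc m)
  have e: "Qs (Suc (Suc m)) = (\<lambda>x. Qs (Suc m) x + x ^ Suc m / fact (Suc m))"
    by (rule ext) (simp only: Qs_Suc[of "Suc m"])
  have p: "((\<lambda>x. x ^ Suc m / fact (Suc m)) has_real_derivative x ^ m / fact m) (at x)"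
    by (rule DERIV_cong, rule DERIV_cdivide, rule DERIV_pow)
       (simp add: fact_Suc field_simps del: of_nat_Suc)
  have "((\<lambda>x. Qs (Suc m) x + x ^ Suc m / fact (Suc m)) has_real_derivative
      Qs m x + x ^ m / fact m) (at x)"
    by (intro DERIV_add Suc p)
  then show ?case unfolding e by (simp add: Qs_Suc)
qed

lemma Qs_deriv_chain: "((\<lambda>x. Qs (Suc m) (g x)) has_real_derivative Qs m (g x) * g') (at x)"
  if "(g has_real_derivative g') (at x)"
  using DERIV_chain2[OF Qs_deriv that] .

lemma ftc01:
  assumes "\<And>x. (F has_real_derivative f x) (at x)"
  shows "(f has_integral (F 1 - F 0)) {0..1::real}"
  by (rule fundamental_theorem_of_calculus)
     (auto simp: has_real_derivative_iff_has_vector_derivative[symmetric]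
       intro: has_field_derivative_at_within assms)

lemma int_K1:
  assumes w: "w \<noteq> 0"
  shows "((\<lambda>s. (1 - s) ^ m * exp (s * w)) has_integral
     fact m / w ^ Suc m * (exp w - Qs (Suc m) w)) {0..1}"
proof -
  define F where "F s = fact m / w ^ Suc m * (exp (s * w) * Qs (Suc m) (w * (1 - s)))" for s
  have "(F has_real_derivative (1 - s) ^ m * exp (s * w)) (at s)" for s
  proof -
    have d: "((\<lambda>s. Qs (Suc m) (w * (1 - s))) has_real_derivative Qs m (w * (1 - s)) * (- w)) (at s)"
      by (rule Qs_deriv_chain) (auto intro!: derivative_eq_intros)
    have "(F has_real_derivative fact m / w ^ Suc m * (exp (s * w) * w * Qs (Suc m) (w * (1 - s))
        + exp (s * w) * (Qs m (w * (1 - s)) * (- w)))) (at s)"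
      unfolding F_def
      by (rule DERIV_cmult, rule DERIV_cong[OF DERIV_mult[OF _ d]])
        (auto intro!: derivative_eq_intros)
    moreover have "fact m / w ^ Suc m * (exp (s * w) * w * Qs (Suc m) (w * (1 - s))
        + exp (s * w) * (Qs m (w * (1 - s)) * (- w))) = (1 - s) ^ m * exp (s * w)"
      using w by (simp only: Qs_Suc power_mult_distrib) (simp add: field_simps)
    ultimately show ?thesis by simp
  qed
  from ftc01[of F, OF this] have "((\<lambda>s. (1 - s) ^ m * exp (s * w)) has_integral F 1 - F 0) {0..1}" .
  moreover have "F 1 - F 0 = fact m / w ^ Suc m * (exp w - Qs (Suc m) w)"
    by (simp add: F_def Qs_0 right_diff_distrib)
  ultimately show ?thesis by simp
qed

lemma int_K2:
  assumes b: "b \<noteq> 0"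
  shows "((\<lambda>z. z ^ m * exp (z * b)) has_integral
     fact m / (- b) ^ Suc m * (1 - exp b * Qs (Suc m) (- b))) {0..1}"
proof -
  define F where "F z = - (fact m / (- b) ^ Suc m) * (exp (z * b) * Qs (Suc m) (- b * z))" for z
  have "(F has_real_derivative z ^ m * exp (z * b)) (at z)" for z
  proof -
    have d: "((\<lambda>z. Qs (Suc m) (- b * z)) has_real_derivative Qs m (- b * z) * (- b)) (at z)"
      by (rule Qs_deriv_chain) (auto intro!: derivative_eq_intros)
    have "(F has_real_derivative - (fact m / (- b) ^ Suc m) * (exp (z * b) * b * Qs (Suc m) (- b * z)
        + exp (z * b) * (Qs m (- b * z) * (- b)))) (at z)"
      unfolding F_def
      by (rule DERIV_cmult, rule DERIV_cong[OF DERIV_mult[OF _ d]])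
        (auto intro!: derivative_eq_intros)
    moreover have "- (fact m / (- b) ^ Suc m) * (exp (z * b) * b * Qs (Suc m) (- b * z)
        + exp (z * b) * (Qs m (- b * z) * (- b))) = z ^ m * exp (z * b)"
      using b by (simp only: Qs_Suc power_mult_distrib) (simp add: field_simps)
    ultimately show ?thesis by simp
  qed
  from ftc01[of F, OF this] have "((\<lambda>z. z ^ m * exp (z * b)) has_integral F 1 - F 0) {0..1}" .
  moreover have "F 1 - F 0 = fact m / (- b) ^ Suc m * (1 - exp b * Qs (Suc m) (- b))"
    by (simp add: F_def Qs_0 algebra_simps)
  ultimately show ?thesis by simp
qed


locale S13 =
  fixes v :: "nat \<Rightarrow> real^'n" and c :: "real^'n" and u :: real and d :: nat
  assumes d_def: "d = CARD('n)" and inj: "inj_on v {0..d}"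
    and indep: "\<not> affine_dependent (v ` {0..d})"
    and u_def: "\<forall>j\<in>{1..d}. c \<bullet> v 0 - c \<bullet> v j = u" and u_nz: "u \<noteq> 0"
begin

definition "A = c \<bullet> v 0"
definition "B = A - u"
definition "J = simplex_of v d"
definition "V = v ` {0..d}"
definition "lam w = (c \<bullet> w - B) / u"

lemma d_pos: "1 \<le> d"
  using d_def by (simp add: Suc_leI)

lemma cv: "j \<in> {1..d} \<Longrightarrow> c \<bullet> v j = B"
  using u_def by (auto simp: B_def A_def)

lemma c_nz: "c \<noteq> 0"
  using cv[of 1] d_pos u_nz by (auto simp: B_def A_def)

lemma lam_v0: "lam (v 0) = 1"
  using u_nz by (simp add: lam_def B_def A_def)

lemma lam_vj: "j \<in> {1..d} \<Longrightarrow> lam (v j) = 0"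
  using cv by (simp add: lam_def)

lemma lam_V: "p \<in> V \<Longrightarrow> lam p = (if p = v 0 then 1 else 0)"
proof -
  assume "p \<in> V"
  then obtain j where j: "j \<in> {0..d}" "p = v j" by (auto simp: V_def)
  show ?thesis
  proof (cases "j = 0")
    case True then show ?thesis using j lam_v0 by simp
  next
    case False
    then have "j \<in> {1..d}" using j by auto
    then have "lam p = 0" using j lam_vj by simp
    moreover then have "p \<noteq> v 0" using lam_v0 by auto
    ultimately show ?thesis by simp
  qed
qed

lemma finV: "finite V" by (simp add: V_def)
lemma v0V: "v 0 \<in> V" by (simp add: V_def)

lemma J_hull: "J = convex hull V"
  by (simp add: J_def V_def simplex_of_def)

lemma J_weights: "w \<in> J \<Longrightarrow> \<exists>\<mu>. (\<forall>p\<in>V. 0 \<le> \<mu> p) \<and> sum \<mu> V = 1 \<and> (\<Sum>p\<in>V. \<mu> p *\<^sub>R p) = w"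
  by (simp add: J_hull convex_hull_finite[OF finV])

lemma weights_J: "(\<forall>p\<in>V. 0 \<le> \<mu> p) \<Longrightarrow> sum \<mu> V = 1 \<Longrightarrow> (\<Sum>p\<in>V. \<mu> p *\<^sub>R p) \<in> J"
  by (simp add: J_hull convex_hull_finite[OF finV] exI[of _ \<mu>])

lemma lam_comb:
  assumes "sum \<mu> V = 1"
  shows "lam (\<Sum>p\<in>V. \<mu> p *\<^sub>R p) = \<mu> (v 0)"
proof -
  have 1: "c \<bullet> (\<Sum>p\<in>V. \<mu> p *\<^sub>R p) = (\<Sum>p\<in>V. \<mu> p * (c \<bullet> p))"
    by (simp add: inner_sum_right)
  have 2: "(\<Sum>p\<in>V. \<mu> p * B) = B"
    using assms by (simp add: sum_distrib_right[symmetric])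
  have "lam (\<Sum>p\<in>V. \<mu> p *\<^sub>R p) = ((\<Sum>p\<in>V. \<mu> p * (c \<bullet> p)) - (\<Sum>p\<in>V. \<mu> p * B)) / u"
    unfolding lam_def 1 2 ..
  also have "\<dots> = (\<Sum>p\<in>V. (\<mu> p * (c \<bullet> p) - \<mu> p * B) / u)"
    by (simp only: sum_subtractf[symmetric] sum_divide_distrib)
  also have "\<dots> = (\<Sum>p\<in>V. \<mu> p * lam p)"
    by (rule sum.cong) (simp_all add: lam_def right_diff_distrib[symmetric])
  also have "\<dots> = (\<Sum>p\<in>V. if p = v 0 then \<mu> p else 0)"
    by (rule sum.cong) (auto simp: lam_V)
  also have "\<dots> = \<mu> (v 0)"
    using finV v0V by simp
  finally show ?thesis .
qed

lemma lam_J: "w \<in> J \<Longrightarrow> 0 \<le> lam w \<and> lam w \<le> 1"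
proof -
  assume "w \<in> J"
  then obtain \<mu> where m: "\<forall>p\<in>V. 0 \<le> \<mu> p" "sum \<mu> V = 1" "(\<Sum>p\<in>V. \<mu> p *\<^sub>R p) = w"
    using J_weights by blast
  have "lam w = \<mu> (v 0)" using lam_comb[OF m(2)] m(3) by simp
  moreover have "\<mu> (v 0) \<le> sum \<mu> V"
    using m(1) finV v0V by (intro member_le_sum) auto
  ultimately show ?thesis using m v0V by auto
qed

lemma compact_J: "compact J"
  unfolding J_hull by (rule compact_convex_hull[OF finite_imp_compact[OF finV]])

lemma v0J: "v 0 \<in> J"
  unfolding J_hull by (rule hull_inc[OF v0V])

lemma convex_J: "convex J"
  unfolding J_hull by (rule convex_convex_hull)

lemma slice:
  assumes x: "0 \<le> x" "x < 1"
  shows "{w\<in>J. x \<le> lam w} = (\<lambda>y. x *\<^sub>R v 0 + (1 - x) *\<^sub>R y) ` J"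
proof safe
  fix w assume w: "w \<in> J" "x \<le> lam w"
  then obtain \<mu> where m: "\<forall>p\<in>V. 0 \<le> \<mu> p" "sum \<mu> V = 1" "(\<Sum>p\<in>V. \<mu> p *\<^sub>R p) = w"
    using J_weights by blast
  have l: "\<mu> (v 0) = lam w" using lam_comb[OF m(2)] m(3) by simp
  define \<mu>' where "\<mu>' p = (\<mu> p - (if p = v 0 then x else 0)) / (1 - x)" for p
  have "\<forall>p\<in>V. 0 \<le> \<mu>' p" using m(1) x w(2) l by (auto simp: \<mu>'_def)
  moreover have "sum \<mu>' V = 1"
    using x m(2) finV v0V
    by (simp add: \<mu>'_def sum_divide_distrib[symmetric] sum_subtractf)
  ultimately have yJ: "(\<Sum>p\<in>V. \<mu>' p *\<^sub>R p) \<in> J" by (rule weights_J)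
  have "x *\<^sub>R v 0 + (1 - x) *\<^sub>R (\<Sum>p\<in>V. \<mu>' p *\<^sub>R p) = (\<Sum>p\<in>V. \<mu> p *\<^sub>R p)"
  proof -
    have "(1 - x) *\<^sub>R (\<Sum>p\<in>V. \<mu>' p *\<^sub>R p) = (\<Sum>p\<in>V. (\<mu> p - (if p = v 0 then x else 0)) *\<^sub>R p)"
      using x by (simp add: scaleR_sum_right \<mu>'_def)
    also have "\<dots> = (\<Sum>p\<in>V. \<mu> p *\<^sub>R p) - (\<Sum>p\<in>V. (if p = v 0 then x else 0) *\<^sub>R p)"
      by (simp add: scaleR_diff_left sum_subtractf)
    also have "(\<Sum>p\<in>V. (if p = v 0 then x else 0) *\<^sub>R p) = x *\<^sub>R v 0"
      using finV v0V by (simp add: if_distrib[of "\<lambda>t. t *\<^sub>R _"] sum.delta cong: if_cong)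
    finally show ?thesis by simp
  qed
  then show "w \<in> (\<lambda>y. x *\<^sub>R v 0 + (1 - x) *\<^sub>R y) ` J"
    using yJ m(3) by (intro image_eqI[of _ _ "(\<Sum>p\<in>V. \<mu>' p *\<^sub>R p)"]) auto
next
  fix y assume y: "y \<in> J"
  show "x *\<^sub>R v 0 + (1 - x) *\<^sub>R y \<in> J"
    using convex_J v0J y x by (intro convexD) auto
  have "lam (x *\<^sub>R v 0 + (1 - x) *\<^sub>R y) = x * lam (v 0) + (1 - x) * lam y"
  proof -
    have "c \<bullet> (x *\<^sub>R v 0 + (1 - x) *\<^sub>R y) = x * (c \<bullet> v 0) + (1 - x) * (c \<bullet> y)"
      by (simp only: inner_add_right inner_scaleR_right)
    then show ?thesis using u_nz by (simp add: lam_def field_simps)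
  qed
  then show "x \<le> lam (x *\<^sub>R v 0 + (1 - x) *\<^sub>R y)"
    using lam_J[OF y] lam_v0 x by (simp add: mult_nonneg_nonneg)
qed

end

lemma nn_integral_affine:
  fixes g :: "'a::euclidean_space \<Rightarrow> ennreal"
  assumes c: "c \<noteq> 0" and g[measurable]: "g \<in> borel_measurable borel"
  shows "(\<integral>\<^sup>+x. g x \<partial>lborel) = ennreal (\<bar>c\<bar> ^ DIM('a)) * (\<integral>\<^sup>+y. g (t + c *\<^sub>R y) \<partial>lborel)"
proof -
  have "(\<integral>\<^sup>+x. g x \<partial>lborel) = (\<integral>\<^sup>+x. g x \<partial>(density (distr lborel borel (\<lambda>x. t + c *\<^sub>R x)) (\<lambda>_. \<bar>c\<bar>^DIM('a))))"
    by (rule arg_cong[where f="\<lambda>M. integral\<^sup>N M g"]) (rule lborel_affine[OF c])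
  also have "\<dots> = (\<integral>\<^sup>+x. ennreal (\<bar>c\<bar>^DIM('a)) * g x \<partial>(distr lborel borel (\<lambda>x. t + c *\<^sub>R x)))"
    by (subst nn_integral_density) auto
  also have "\<dots> = (\<integral>\<^sup>+y. ennreal (\<bar>c\<bar>^DIM('a)) * g (t + c *\<^sub>R y) \<partial>lborel)"
    by (subst nn_integral_distr) auto
  also have "\<dots> = ennreal (\<bar>c\<bar> ^ DIM('a)) * (\<integral>\<^sup>+y. g (t + c *\<^sub>R y) \<partial>lborel)"
    by (rule nn_integral_cmult) auto
  finally show ?thesis .
qed

lemma emeasure_affine_image:
  fixes S :: "'a::euclidean_space set"
  assumes c: "c \<noteq> 0" and S[measurable]: "S \<in> sets borel"
  shows "emeasure lborel ((\<lambda>y. t + c *\<^sub>R y) ` S) = ennreal (\<bar>c\<bar> ^ DIM('a)) * emeasure lborel S"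
proof -
  have im: "(\<lambda>y. t + c *\<^sub>R y) ` S = (\<lambda>y. inverse c *\<^sub>R (y - t)) -` S"
    using c by (force simp: image_iff)
  have [measurable]: "(\<lambda>y. t + c *\<^sub>R y) ` S \<in> sets borel"
    unfolding im by (rule measurable_sets_borel[OF _ S]) measurable
  have "emeasure lborel ((\<lambda>y. t + c *\<^sub>R y) ` S) = (\<integral>\<^sup>+x. indicator ((\<lambda>y. t + c *\<^sub>R y) ` S) x \<partial>lborel)"
    by simp
  also have "\<dots> = ennreal (\<bar>c\<bar> ^ DIM('a)) * (\<integral>\<^sup>+y. indicator ((\<lambda>y. t + c *\<^sub>R y) ` S) (t + c *\<^sub>R y) \<partial>lborel)"
    by (rule nn_integral_affine[OF c]) measurable
  also have "(\<lambda>y. indicator ((\<lambda>y. t + c *\<^sub>R y) ` S) (t + c *\<^sub>R y)) = (indicator S :: _ \<Rightarrow> ennreal)"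
    using c by (auto simp: indicator_def im)
  finally show ?thesis by simp
qed

lemma emeasure_tonelli3:
  fixes S :: "('a::euclidean_space \<times> real \<times> real) set"
  assumes S[measurable]: "S \<in> sets borel"
  shows "emeasure lborel S = (\<integral>\<^sup>+z. \<integral>\<^sup>+x. emeasure lborel {y. (x, y, z) \<in> S} \<partial>lborel \<partial>lborel)"
proof -
  have "emeasure lborel S = emeasure (lborel \<Otimes>\<^sub>M lborel) S"
    by (simp add: lborel_prod)
  also have "\<dots> = (\<integral>\<^sup>+x. emeasure lborel (Pair x -` S) \<partial>lborel)"
  proof -
    have Sm: "S \<in> sets (lborel \<Otimes>\<^sub>M lborel)" unfolding lborel_prod by simp
    show ?thesis by (rule lborel.emeasure_pair_measure_alt[OF Sm])
  qed
  also have "\<dots> = (\<integral>\<^sup>+x. \<integral>\<^sup>+z. emeasure lborel {y. (x, y, z) \<in> S} \<partial>lborel \<partial>lborel)"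
  proof (rule nn_integral_cong)
    fix x :: 'a
    have m: "Pair x -` S \<in> sets borel" by (rule measurable_sets_borel[OF _ S]) measurable
    have "emeasure lborel (Pair x -` S) = emeasure (lborel \<Otimes>\<^sub>M lborel) (Pair x -` S)"
      by (simp add: lborel_prod)
    also have "\<dots> = (\<integral>\<^sup>+z. emeasure lborel ((\<lambda>y. (y, z)) -` (Pair x -` S)) \<partial>lborel)"
    proof -
      have Sm: "Pair x -` S \<in> sets (lborel \<Otimes>\<^sub>M lborel)" unfolding lborel_prod using m by simp
      show ?thesis by (rule lborel_pair.emeasure_pair_measure_alt2[OF Sm])
    qed
    finally show "emeasure lborel (Pair x -` S) = (\<integral>\<^sup>+z. emeasure lborel {y. (x, y, z) \<in> S} \<partial>lborel)"
      by (simp add: vimage_def)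
  qed
  also have "\<dots> = (\<integral>\<^sup>+z. \<integral>\<^sup>+x. emeasure lborel {y. (x, y, z) \<in> S} \<partial>lborel \<partial>lborel)"
  proof (rule lborel_pair.Fubini'[symmetric])
    define Q where "Q = (\<lambda>p. (fst (fst p), snd p, snd (fst p))) -` S"
    have "Q \<in> sets ((lborel \<Otimes>\<^sub>M lborel) \<Otimes>\<^sub>M lborel)"
      unfolding Q_def lborel_prod sets_lborel
      by (rule measurable_sets_borel[OF borel_measurable_continuous_onI S]) (intro continuous_intros)
    from lborel.measurable_emeasure_Pair[OF this]
    have "(\<lambda>p. emeasure lborel (Pair p -` Q)) \<in> borel_measurable (lborel \<Otimes>\<^sub>M lborel)" .
    moreover have "(\<lambda>p. emeasure lborel (Pair p -` Q)) = case_prod (\<lambda>x z. emeasure lborel {y. (x, y, z) \<in> S})"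
      by (auto simp: Q_def vimage_def)
    ultimately show "case_prod (\<lambda>x z. emeasure lborel {y. (x, y, z) \<in> S}) \<in> borel_measurable (lborel \<Otimes>\<^sub>M lborel)"
      by simp
  qed
  finally show ?thesis .
qed


lemma ftc_poly:
  assumes "a \<le> 1" "1 \<le> (d::nat)"
  shows "((\<lambda>s. real d * (1 - s) ^ (d - 1)) has_integral (1 - a) ^ d) {a..1}"
proof -
  have "((\<lambda>s. real d * (1 - s) ^ (d - 1)) has_integral ((\<lambda>s. - ((1 - s) ^ d)) 1 - (\<lambda>s. - ((1 - s) ^ d)) a)) {a..1}"
  proof (rule fundamental_theorem_of_calculus[OF assms(1)])
    fix x :: real
    have "((\<lambda>s. - ((1 - s) ^ d)) has_real_derivative real d * (1 - x) ^ (d - 1)) (at x)"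
      by (rule DERIV_cong, (rule derivative_eq_intros)+) (auto simp: assms)
    then show "((\<lambda>s. - ((1 - s) ^ d)) has_vector_derivative real d * (1 - x) ^ (d - 1)) (at x within {a..1})"
      by (simp add: has_real_derivative_iff_has_vector_derivative[symmetric] has_field_derivative_at_within)
  qed
  then show ?thesis using assms by (simp add: power_0_left)
qed

context S13 begin

definition "volJ = measure lborel J"

lemma J_borel[measurable]: "J \<in> sets borel"
  using compact_J by (simp add: compact_imp_closed)

lemma emeasure_J: "emeasure lborel J = ennreal volJ"
  unfolding volJ_def
  by (rule emeasure_eq_ennreal_measure)
     (use emeasure_bounded_finite[OF compact_imp_bounded[OF compact_J]] in auto)

lemma volJ_nonneg: "0 \<le> volJ" by (simp add: volJ_def)

lemma lam_meas[measurable]: "lam \<in> borel_measurable borel"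
  unfolding lam_def[abs_def] by measurable

lemma cdf:
  "emeasure lborel {w\<in>J. x < lam w} = ennreal ((if x < 0 then 1 else if x < 1 then (1 - x) ^ d else 0) * volJ)"
proof (cases "x < 0")
  case True
  then have "{w\<in>J. x < lam w} = J" using lam_J by force
  then show ?thesis using True emeasure_J by simp
next
  case False
  show ?thesis
  proof (cases "x < 1")
    case False
    then have e: "{w\<in>J. x < lam w} = {}" using lam_J by force
    show ?thesis unfolding e using False by simp
  next
    case x1: True
    define H where "H = {w. c \<bullet> w = B + x * u}"
    have H_null: "H \<in> null_sets lborel"
    proof -
      have "negligible H" unfolding H_def by (rule negligible_hyperplane) (use c_nz in auto)
      then have "H \<in> null_sets lebesgue" by (simp add: negligible_iff_null_sets)
      moreover have "H \<in> sets lborel" unfolding H_def by measurable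
      ultimately show ?thesis by (simp add: null_sets_completion_iff)
    qed
    have lx: "lam w = x \<longleftrightarrow> c \<bullet> w = B + x * u" for w
      using u_nz by (auto simp: lam_def field_simps)
    have lx2: "x < lam w \<longleftrightarrow> x \<le> lam w \<and> \<not> (c \<bullet> w = B + x * u)" for w
      using lx[of w] by auto
    have eq: "{w\<in>J. x < lam w} = {w\<in>J. x \<le> lam w} - H"
      unfolding H_def lx2 by blast
    have "emeasure lborel {w\<in>J. x < lam w} = emeasure lborel {w\<in>J. x \<le> lam w}"
      unfolding eq by (rule emeasure_Diff_null_set[OF H_null]) measurable
    also have "\<dots> = emeasure lborel ((\<lambda>y. x *\<^sub>R v 0 + (1 - x) *\<^sub>R y) ` J)"
      using False x1 slice by simp
    also have "\<dots> = ennreal (\<bar>1 - x\<bar> ^ DIM(real^'n)) * emeasure lborel J"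
      by (rule emeasure_affine_image) (use x1 in auto)
    also have "\<dots> = ennreal ((1 - x) ^ d * volJ)"
      using x1 emeasure_J d_def volJ_nonneg by (simp add: ennreal_mult)
    finally show ?thesis using False x1 by simp
  qed
qed

definition "dens s = ennreal (volJ * d * (1 - s) ^ (d - 1)) * indicator {0..1::real} s"

lemma dens_meas[measurable]: "dens \<in> borel_measurable borel"
  unfolding dens_def[abs_def] by measurable

lemma dens_cdf:
  "emeasure (density lborel dens) {x<..} = ennreal ((if x < 0 then 1 else if x < 1 then (1 - x) ^ d else 0) * volJ)"
proof -
  have "emeasure (density lborel dens) {x<..} = (\<integral>\<^sup>+s. dens s * indicator {x<..} s \<partial>lborel)"
    by (rule emeasure_density) auto
  also have "\<dots> = ennreal ((if x < 0 then 1 else if x < 1 then (1 - x) ^ d else 0) * volJ)"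
  proof (cases "x < 1")
    case False
    then have z: "(\<lambda>s. dens s * indicator {x<..} s) = (\<lambda>_. 0)"
      by (auto simp: dens_def indicator_def fun_eq_iff)
    show ?thesis unfolding z using False by simp
  next
    case True
    define a where "a = max x 0"
    have "(\<integral>\<^sup>+s. dens s * indicator {x<..} s \<partial>lborel)
        = (\<integral>\<^sup>+s. ennreal (volJ * (d * (1 - s) ^ (d - 1))) * indicator {a..1} s \<partial>lborel)"
    proof (rule nn_integral_cong_AE)
      show "AE s in lborel. dens s * indicator {x<..} s = ennreal (volJ * (d * (1 - s) ^ (d - 1))) * indicator {a..1} s"
        using AE_lborel_singleton[of x]
        by eventually_elim (auto simp: dens_def indicator_def a_def ac_simps)
    qed
    also have "\<dots> = ennreal (volJ * (1 - a) ^ d)"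
    proof (rule nn_integral_has_integral_lebesgue')
      have "((\<lambda>s. real d * (1 - s) ^ (d - 1)) has_integral (1 - a) ^ d) {a..1}"
        by (rule ftc_poly) (use True d_pos in \<open>auto simp: a_def\<close>)
      then show "((\<lambda>s. volJ * (real d * (1 - s) ^ (d - 1))) has_integral volJ * (1 - a) ^ d) {a..1}"
        by (rule has_integral_mult_right)
      show "\<And>s. s \<in> {a..1} \<Longrightarrow> 0 \<le> volJ * (real d * (1 - s) ^ (d - 1))"
        using volJ_nonneg by simp
    qed
    finally show ?thesis using True by (simp add: a_def ac_simps)
  qed
  finally show ?thesis .
qed

lemma distr_eq: "distr (density lborel (indicator J)) borel lam = density lborel dens"
proof (rule measure_eqI_lessThan)
  fix x :: real
  have "emeasure (distr (density lborel (indicator J)) borel lam) {x<..}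
      = emeasure (density lborel (indicator J)) (lam -` {x<..})"
    by (subst emeasure_distr) auto
  also have "\<dots> = (\<integral>\<^sup>+w. indicator J w * indicator (lam -` {x<..}) w \<partial>lborel)"
  proof -
    have lm: "lam -` {x<..} \<in> sets borel" by (rule measurable_sets_borel[OF lam_meas]) simp
    have lm': "lam -` {x<..} \<in> sets lborel" using lm by simp
    have im: "indicator J \<in> borel_measurable lborel" by simp
    show ?thesis by (rule emeasure_density[OF im lm'])
  qed
  also have "\<dots> = (\<integral>\<^sup>+w. indicator {w\<in>J. x < lam w} w \<partial>lborel)"
    by (intro nn_integral_cong) (auto simp: indicator_def)
  also have "\<dots> = emeasure lborel {w\<in>J. x < lam w}"
    by (rule nn_integral_indicator) measurable
  finally have *: "emeasure (distr (density lborel (indicator J)) borel lam) {x<..}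
      = ennreal ((if x < 0 then 1 else if x < 1 then (1 - x) ^ d else 0) * volJ)"
    using cdf by simp
  then show "emeasure (distr (density lborel (indicator J)) borel lam) {x<..} < \<infinity>" by simp
  show "emeasure (distr (density lborel (indicator J)) borel lam) {x<..} = emeasure (density lborel dens) {x<..}"
    using * dens_cdf by simp
qed auto

lemma push:
  assumes g[measurable]: "g \<in> borel_measurable borel"
  shows "(\<integral>\<^sup>+w. indicator J w * g (lam w) \<partial>lborel) = (\<integral>\<^sup>+s. dens s * g s \<partial>lborel)"
proof -
  have "(\<integral>\<^sup>+w. indicator J w * g (lam w) \<partial>lborel) = (\<integral>\<^sup>+w. g (lam w) \<partial>density lborel (indicator J))"
    by (subst nn_integral_density) auto
  also have "\<dots> = (\<integral>\<^sup>+s. g s \<partial>distr (density lborel (indicator J)) borel lam)"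
    by (subst nn_integral_distr) auto
  also have "\<dots> = (\<integral>\<^sup>+s. g s \<partial>density lborel dens)"
    by (simp add: distr_eq)
  also have "\<dots> = (\<integral>\<^sup>+s. dens s * g s \<partial>lborel)"
    by (subst nn_integral_density) auto
  finally show ?thesis .
qed

end

lemma hi_cong: "(f has_integral i) S \<Longrightarrow> (\<And>x. f x = g x) \<Longrightarrow> i = j \<Longrightarrow> (g has_integral j) S"
proof -
  assume "(f has_integral i) S" "\<And>x. f x = g x" "i = j"
  moreover have "f = g" using \<open>\<And>x. f x = g x\<close> by (rule ext)
  ultimately show ?thesis by simp
qed

lemma int_pow01: "((\<lambda>z::real. z ^ k) has_integral 1 / (real k + 1)) {0..1}"
proof -
  have "((\<lambda>z::real. z ^ k) has_integral ((\<lambda>z. z ^ Suc k / (real k + 1)) 1 - (\<lambda>z. z ^ Suc k / (real k + 1)) 0)) {0..1}"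
  proof (rule ftc01)
    fix x :: real
    show "((\<lambda>z. z ^ Suc k / (real k + 1)) has_real_derivative x ^ k) (at x)"
      by (rule DERIV_cong, rule DERIV_cdivide, rule DERIV_pow) (simp add: field_simps)
  qed
  then show ?thesis by simp
qed

lemma sint1: "1 \<le> d \<Longrightarrow> ((\<lambda>s. real d * (1 - s) ^ (d - 1)) has_integral 1) {0..1}"
  using ftc_poly[of 0 d] by simp

lemma sint2:
  assumes d: "1 \<le> d"
  shows "((\<lambda>s. real d * (1 - s) ^ (d - 1) * s) has_integral 1 / (real d + 1)) {0..1}"
proof -
  obtain m where m: "d = Suc m" using d by (cases d) auto
  have a: "((\<lambda>s. real (Suc d) * (1 - s) ^ (Suc d - 1)) has_integral 1) {0..1}"
    by (rule sint1) simp
  have b: "((\<lambda>s. real d * (1 - s) ^ (d - 1) - (real d / real (Suc d)) * (real (Suc d) * (1 - s) ^ (Suc d - 1)))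
      has_integral 1 - (real d / real (Suc d)) * 1) {0..1}"
    by (intro has_integral_diff sint1 d has_integral_mult_right a)
  show ?thesis
    by (rule hi_cong[OF b]) (simp_all add: m field_simps)
qed

lemma sint3:
  assumes d: "1 \<le> d" and w: "w \<noteq> 0"
  shows "((\<lambda>s. real d * (1 - s) ^ (d - 1) * exp (s * w)) has_integral fact d / w ^ d * (exp w - Qs d w)) {0..1}"
proof -
  obtain m where m: "d = Suc m" using d by (cases d) auto
  have "((\<lambda>s. real d * ((1 - s) ^ m * exp (s * w))) has_integral real d * (fact m / w ^ Suc m * (exp w - Qs (Suc m) w))) {0..1}"
    by (intro has_integral_mult_right int_K1 w)
  then show ?thesis
    by (rule hi_cong) (simp_all add: m fact_Suc)
qed

lemma GI:
  assumes m: "d = Suc m" and A: "A = B + u" and A0: "A \<noteq> 0" and B0: "B \<noteq> 0"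
  shows "((\<lambda>z. exp (z * A) - exp (z * B) * Qs d (z * u)) has_integral
     (exp A - exp B * Qs d u - u ^ d / (- B) ^ d * (1 - exp B * Qs d (- B))) / A) {0..1}"
proof -
  define G where "G z = exp (z * A) - exp (z * B) * Qs d (z * u)" for z
  have "((\<lambda>z. A * G z + exp (z * B) * u ^ d * z ^ m / fact m) has_integral G 1 - G 0) {0..1}"
  proof (rule ftc01)
    fix z :: real
    have dq: "((\<lambda>z. Qs (Suc m) (z * u)) has_real_derivative Qs m (z * u) * u) (at z)"
      by (rule Qs_deriv_chain) (auto intro!: derivative_eq_intros)
    have d1: "((\<lambda>z. exp (z * A)) has_real_derivative A * exp (z * A)) (at z)"
      by (auto intro!: derivative_eq_intros)
    have d2: "((\<lambda>z. exp (z * B)) has_real_derivative B * exp (z * B)) (at z)"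
      by (auto intro!: derivative_eq_intros)
    have "(G has_real_derivative A * exp (z * A) - (B * exp (z * B) * Qs d (z * u) + Qs m (z * u) * u * exp (z * B))) (at z)"
      unfolding G_def m by (rule DERIV_diff[OF d1 DERIV_mult[OF d2 dq]])
    moreover have "A * exp (z * A) - (B * exp (z * B) * Qs d (z * u) + Qs m (z * u) * u * exp (z * B))
        = A * G z + exp (z * B) * u ^ d * z ^ m / fact m"
      unfolding G_def m by (simp only: Qs_Suc power_mult_distrib A) (simp add: field_simps)
    ultimately show "(G has_real_derivative A * G z + exp (z * B) * u ^ d * z ^ m / fact m) (at z)"
      by simp
  qed
  moreover have "((\<lambda>z. (u ^ d / fact m) * (z ^ m * exp (z * B))) has_integral
      (u ^ d / fact m) * (fact m / (- B) ^ Suc m * (1 - exp B * Qs (Suc m) (- B)))) {0..1}"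
    by (intro has_integral_mult_right int_K2 B0)
  ultimately have "((\<lambda>z. (A * G z + exp (z * B) * u ^ d * z ^ m / fact m) - (u ^ d / fact m) * (z ^ m * exp (z * B))) has_integral
      (G 1 - G 0) - (u ^ d / fact m) * (fact m / (- B) ^ Suc m * (1 - exp B * Qs (Suc m) (- B)))) {0..1}"
    by (rule has_integral_diff)
  then have "((\<lambda>z. (1 / A) * ((A * G z + exp (z * B) * u ^ d * z ^ m / fact m) - (u ^ d / fact m) * (z ^ m * exp (z * B)))) has_integral
      (1 / A) * ((G 1 - G 0) - (u ^ d / fact m) * (fact m / (- B) ^ Suc m * (1 - exp B * Qs (Suc m) (- B))))) {0..1}"
    by (rule has_integral_mult_right)
  then show ?thesis
  proof (rule hi_cong)
    fix z show "(1 / A) * ((A * G z + exp (z * B) * u ^ d * z ^ m / fact m) - (u ^ d / fact m) * (z ^ m * exp (z * B)))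
      = exp (z * A) - exp (z * B) * Qs d (z * u)"
      using A0 by (simp add: G_def field_simps)
  next
    show "(1 / A) * ((G 1 - G 0) - (u ^ d / fact m) * (fact m / (- B) ^ Suc m * (1 - exp B * Qs (Suc m) (- B))))
      = (exp A - exp B * Qs d u - u ^ d / (- B) ^ d * (1 - exp B * Qs d (- B))) / A"
      using A0 B0 by (simp add: G_def m Qs_0 field_simps)
  qed
qed


context S13 begin

definition "fN x = exp (c \<bullet> x) - 1"
definition "ell x = (exp B - 1) + lam x * (exp A - exp B)"

lemma ell_form: "ell = (\<lambda>x. (((exp A - exp B) / u) *\<^sub>R c) \<bullet> x + (exp B - 1 - B * (exp A - exp B) / u))"
  using u_nz by (auto simp: fun_eq_iff ell_def lam_def field_simps)

lemma affine_hull_V: "affine hull V = UNIV"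
proof -
  have "card V = d + 1"
    unfolding V_def using inj by (simp add: card_image)
  with aff_dim_affine_independent[OF indep[folded V_def]]
  have "aff_dim V = int d" by simp
  then have "aff_dim V = int DIM(real^'n)" using d_def by simp
  then show ?thesis by (simp only: aff_dim_eq_full)
qed

lemma ell_V: "i \<in> {0..d} \<Longrightarrow> ell (v i) = fN (v i)"
proof -
  assume i: "i \<in> {0..d}"
  show ?thesis
  proof (cases "i = 0")
    case True then show ?thesis by (simp add: ell_def fN_def lam_v0 A_def)
  next
    case False
    then have "i \<in> {1..d}" using i by auto
    then show ?thesis using lam_vj cv by (simp add: ell_def fN_def)
  qed
qed

lemma interp: "affine_interp fN v d = ell"
  unfolding affine_interp_def
proof (rule the_equality)
  show "(\<exists>a b. ell = (\<lambda>x. a \<bullet> x + b)) \<and> (\<forall>i\<in>{0..d}. ell (v i) = fN (v i))"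
    using ell_form ell_V by blast
next
  fix g assume g: "(\<exists>a b. g = (\<lambda>x. a \<bullet> x + b)) \<and> (\<forall>i\<in>{0..d}. g (v i) = fN (v i))"
  then obtain a b where ab: "g = (\<lambda>x. a \<bullet> x + b)" by blast
  define a' where "a' = ((exp A - exp B) / u) *\<^sub>R c"
  define b' where "b' = exp B - 1 - B * (exp A - exp B) / u"
  have E: "{x. g x = ell x} = {x. (a - a') \<bullet> x = b' - b}"
    by (auto simp: ab ell_form a'_def b'_def inner_diff_left algebra_simps)
  have "V \<subseteq> {x. g x = ell x}"
    using g ell_V by (auto simp: V_def)
  moreover have "affine {x. g x = ell x}" unfolding E by (rule affine_hyperplane)
  ultimately have "affine hull V \<subseteq> {x. g x = ell x}" by (rule hull_minimal)
  then show "g = ell" using affine_hull_V by auto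
qed

lemma homog_ell_scaled: "homog ell (z *\<^sub>R w) z = z * ell w"
  by (simp add: homog_def ell_form inner_scaleR_right algebra_simps)

lemma cw: "c \<bullet> w = B + lam w * u"
  using u_nz by (simp add: lam_def)

lemma J_ne: "J \<noteq> {}" using v0J by auto

lemma mem_scaled: "x \<in> (\<lambda>p. z *\<^sub>R p) ` J \<longleftrightarrow> (z = 0 \<and> x = 0) \<or> (z \<noteq> 0 \<and> inverse z *\<^sub>R x \<in> J)"
proof (cases "z = 0")
  case True then show ?thesis using J_ne by auto
next
  case False
  show ?thesis
  proof
    assume "x \<in> (\<lambda>p. z *\<^sub>R p) ` J" then show "(z = 0 \<and> x = 0) \<or> (z \<noteq> 0 \<and> inverse z *\<^sub>R x \<in> J)"
      using False by auto
  next
    assume "(z = 0 \<and> x = 0) \<or> (z \<noteq> 0 \<and> inverse z *\<^sub>R x \<in> J)"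
    then have "inverse z *\<^sub>R x \<in> J" using False by auto
    moreover have "x = z *\<^sub>R (inverse z *\<^sub>R x)" using False by simp
    ultimately show "x \<in> (\<lambda>p. z *\<^sub>R p) ` J" by blast
  qed
qed

lemma emeasure_Icc_any: "emeasure lborel {a..b::real} = ennreal (b - a)"
  by (cases "a \<le> b") (auto simp: ennreal_neg)

lemma xint:
  fixes F :: "real^'n \<Rightarrow> ennreal" and G :: "real^'n \<Rightarrow> real" and g :: "real \<Rightarrow> real"
  assumes z: "0 < z" 
    and Fm: "F \<in> borel_measurable borel"
    and F: "\<And>x. F x = indicator ((\<lambda>p. z *\<^sub>R p) ` J) x * ennreal (G x)"
    and G: "\<And>w. w \<in> J \<Longrightarrow> G (z *\<^sub>R w) = g (lam w)"
    and gm: "g \<in> borel_measurable borel"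
    and gnn: "\<And>s. s \<in> {0..1} \<Longrightarrow> 0 \<le> g s"
    and I: "((\<lambda>s. volJ * d * (1 - s) ^ (d - 1) * g s) has_integral I) {0..1}"
  shows "(\<integral>\<^sup>+x. F x \<partial>lborel) = ennreal (z ^ d * I)"
proof -
  have "(\<integral>\<^sup>+x. F x \<partial>lborel) = ennreal (\<bar>z\<bar> ^ DIM(real^'n)) * (\<integral>\<^sup>+w. F (0 + z *\<^sub>R w) \<partial>lborel)"
    by (rule nn_integral_affine) (use z Fm in auto)
  also have "(\<lambda>w. F (0 + z *\<^sub>R w)) = (\<lambda>w. indicator J w * ennreal (g (lam w)))"
  proof
    fix w
    have "z *\<^sub>R w \<in> (\<lambda>p. z *\<^sub>R p) ` J \<longleftrightarrow> w \<in> J"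
      using z by (simp add: mem_scaled)
    then show "F (0 + z *\<^sub>R w) = indicator J w * ennreal (g (lam w))"
      using G[of w] by (simp add: F indicator_def)
  qed
  also have "(\<integral>\<^sup>+w. indicator J w * ennreal (g (lam w)) \<partial>lborel) = (\<integral>\<^sup>+s. dens s * ennreal (g s) \<partial>lborel)"
    by (rule push) (use gm in measurable)
  also have "\<dots> = (\<integral>\<^sup>+s. ennreal (volJ * d * (1 - s) ^ (d - 1) * g s) * indicator {0..1} s \<partial>lborel)"
  proof (rule nn_integral_cong)
    fix s :: real
    show "dens s * ennreal (g s) = ennreal (volJ * d * (1 - s) ^ (d - 1) * g s) * indicator {0..1} s"
      using gnn[of s] volJ_nonneg by (auto simp: dens_def indicator_def ennreal_mult)
  qed
  also have "\<dots> = ennreal I"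
    by (rule nn_integral_has_integral_lebesgue'[OF _ I]) (use gnn volJ_nonneg in auto)
  finally have "(\<integral>\<^sup>+x. F x \<partial>lborel) = ennreal (\<bar>z\<bar> ^ DIM(real^'n)) * ennreal I" .
  moreover have "0 \<le> I"
    by (rule has_integral_nonneg[OF I]) (use gnn volJ_nonneg in auto)
  ultimately show ?thesis
    using z d_def by (simp add: ennreal_mult zero_le_power)
qed

end

lemma exp_conv:
  fixes t a b :: real
  shows "0 \<le> t \<Longrightarrow> t \<le> 1 \<Longrightarrow> exp ((1 - t) * a + t * b) \<le> (1 - t) * exp a + t * exp b"
  using convex_onD[OF exp_convex, of t a b] by simp

lemma aux_ring:
  fixes a V P E K X Q :: real
  shows "a * (V * (P - E * (K * (X - Q)))) = V * (a * P - E * (a * K) * (X - Q))"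
  by (simp add: algebra_simps)

context S13 begin

definition "hP s = exp B + s * (exp A - exp B) - exp (B + s * u)"
definition "gN z s = z * (exp B - 1 + s * (exp A - exp B)) - exp (z * (B + s * u)) + 1"
definition "CP = exp B + (exp A - exp B) / (real d + 1) - exp B * (fact d / u ^ d * (exp u - Qs d u))"
definition "IN z = volJ * ((z * (exp B - 1) + 1) + z * (exp A - exp B) / (real d + 1)
    - exp (z * B) * (fact d / (z * u) ^ d * (exp (z * u) - Qs d (z * u))))"
definition "HN z = volJ * (z ^ (d + 1) * (exp B - 1) + z ^ d + z ^ (d + 1) * (exp A - exp B) / (real d + 1)
    - fact d / u ^ d * (exp (z * A) - exp (z * B) * Qs d (z * u)))"

lemma AB: "A = B + u" by (simp add: B_def)

lemma dnz[simp]: "real d + 1 \<noteq> 0" "1 + real d \<noteq> 0"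
  by (simp_all add: add_nonneg_eq_0_iff)

lemma hP_nn: "0 \<le> s \<Longrightarrow> s \<le> 1 \<Longrightarrow> 0 \<le> hP s"
proof -
  assume s: "0 \<le> s" "s \<le> 1"
  have "B + s * u = (1 - s) * B + s * A" by (simp add: AB algebra_simps)
  then have "exp (B + s * u) \<le> (1 - s) * exp B + s * exp A" using exp_conv[OF s] by simp
  then show ?thesis by (simp add: hP_def algebra_simps)
qed

lemma gN_nn: "0 \<le> z \<Longrightarrow> z \<le> 1 \<Longrightarrow> 0 \<le> s \<Longrightarrow> s \<le> 1 \<Longrightarrow> 0 \<le> gN z s"
proof -
  assume z: "0 \<le> z" "z \<le> 1" and s: "0 \<le> s" "s \<le> 1"
  have "B + s * u = (1 - s) * B + s * A" by (simp add: AB algebra_simps)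
  then have e1: "exp (B + s * u) \<le> (1 - s) * exp B + s * exp A" using exp_conv[OF s] by simp
  have "exp (z * (B + s * u)) = exp ((1 - z) * 0 + z * (B + s * u))" by simp
  also have "\<dots> \<le> (1 - z) * exp 0 + z * exp (B + s * u)" by (rule exp_conv[OF z])
  also have "\<dots> \<le> (1 - z) + z * ((1 - s) * exp B + s * exp A)"
    using e1 z by (simp add: mult_left_mono)
  finally show ?thesis by (simp add: gN_def algebra_simps)
qed

lemma IP0: "((\<lambda>s. real d * (1 - s) ^ (d - 1) * hP s) has_integral CP) {0..1}"
proof -
  have "((\<lambda>s. (exp B * (real d * (1 - s) ^ (d - 1)) + (exp A - exp B) * (real d * (1 - s) ^ (d - 1) * s))
      - exp B * (real d * (1 - s) ^ (d - 1) * exp (s * u))) has_integral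
      (exp B * 1 + (exp A - exp B) * (1 / (real d + 1))) - exp B * (fact d / u ^ d * (exp u - Qs d u))) {0..1}"
    by (intro has_integral_mult_right has_integral_diff has_integral_add sint1 sint2 sint3 d_pos u_nz)
  then show ?thesis
    by (rule hi_cong) (simp_all add: hP_def CP_def exp_add field_simps)
qed

lemma IP: "((\<lambda>s. volJ * real d * (1 - s) ^ (d - 1) * (z * hP s)) has_integral volJ * z * CP) {0..1}"
  using has_integral_mult_right[OF IP0, of "volJ * z"] by (rule hi_cong) (simp_all add: algebra_simps)

lemma CP_nn: "0 \<le> CP"
  by (rule has_integral_nonneg[OF IP0]) (use hP_nn in auto)

lemma IN_int:
  assumes z: "z \<noteq> 0"
  shows "((\<lambda>s. volJ * real d * (1 - s) ^ (d - 1) * gN z s) has_integral IN z) {0..1}"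
proof -
  have "((\<lambda>s. volJ * (((z * (exp B - 1) + 1) * (real d * (1 - s) ^ (d - 1)) + (z * (exp A - exp B)) * (real d * (1 - s) ^ (d - 1) * s))
      - exp (z * B) * (real d * (1 - s) ^ (d - 1) * exp (s * (z * u))))) has_integral
      volJ * (((z * (exp B - 1) + 1) * 1 + (z * (exp A - exp B)) * (1 / (real d + 1))) - exp (z * B) * (fact d / (z * u) ^ d * (exp (z * u) - Qs d (z * u))))) {0..1}"
    by (intro has_integral_mult_right has_integral_diff has_integral_add sint1 sint2 sint3 d_pos)
       (use z u_nz in simp)
  then show ?thesis
  proof (rule hi_cong)
    fix s
    have "exp (z * (B + s * u)) = exp (z * B) * exp (s * (z * u))"
      by (simp add: exp_add[symmetric] algebra_simps)
    then show "volJ * (((z * (exp B - 1) + 1) * (real d * (1 - s) ^ (d - 1)) + (z * (exp A - exp B)) * (real d * (1 - s) ^ (d - 1) * s))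
      - exp (z * B) * (real d * (1 - s) ^ (d - 1) * exp (s * (z * u)))) = volJ * real d * (1 - s) ^ (d - 1) * gN z s"
      by (simp add: gN_def algebra_simps)
  qed (simp add: IN_def field_simps)
qed

lemma HN_eq: "z \<noteq> 0 \<Longrightarrow> HN z = z ^ d * IN z"
proof -
  assume z: "z \<noteq> 0"
  have e: "exp (z * A) = exp (z * B) * exp (z * u)" by (simp add: AB exp_add[symmetric] algebra_simps)
  have f: "z ^ d * (fact d / (z * u) ^ d) = fact d / u ^ d"
    using z u_nz by (simp add: power_mult_distrib)
  have "z ^ d * IN z = volJ * (z ^ d * ((z * (exp B - 1) + 1) + z * (exp A - exp B) / (real d + 1))
      - exp (z * B) * (z ^ d * (fact d / (z * u) ^ d)) * (exp (z * u) - Qs d (z * u)))"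
    unfolding IN_def by (rule aux_ring)
  also have "\<dots> = volJ * (z ^ d * ((z * (exp B - 1) + 1) + z * (exp A - exp B) / (real d + 1))
      - exp (z * B) * (fact d / u ^ d) * (exp (z * u) - Qs d (z * u)))"
    by (simp only: f)
  also have "\<dots> = HN z"
    by (simp add: HN_def e algebra_simps diff_divide_distrib)
  finally show ?thesis by simp
qed

end

context S13 begin

definition "S0 = {(x, y, z). homog ell x z \<ge> y \<and> y \<ge> z * fN (inverse z *\<^sub>R x)
      \<and> x \<in> (\<lambda>p. z *\<^sub>R p) ` J \<and> 1 \<ge> z \<and> z > 0}"

definition "N0 = {(x, y, z). homog ell x z \<ge> y \<and> y \<ge> fN x
      \<and> x \<in> (\<lambda>p. z *\<^sub>R p) ` J \<and> 1 \<ge> z \<and> z \<ge> 0}"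

lemma ell_meas[measurable]: "ell \<in> borel_measurable borel"
  unfolding ell_def[abs_def] by measurable

lemma fN_meas[measurable]: "fN \<in> borel_measurable borel"
  unfolding fN_def[abs_def] by measurable

lemma S0_alt: "S0 = {p. homog ell (fst p) (snd (snd p)) \<ge> fst (snd p)
    \<and> fst (snd p) \<ge> snd (snd p) * fN (inverse (snd (snd p)) *\<^sub>R fst p)
    \<and> inverse (snd (snd p)) *\<^sub>R fst p \<in> J \<and> 1 \<ge> snd (snd p) \<and> snd (snd p) > 0}"
  by (auto simp: S0_def mem_scaled)

lemma N0_alt: "N0 = {p. homog ell (fst p) (snd (snd p)) \<ge> fst (snd p)
    \<and> fst (snd p) \<ge> fN (fst p)
    \<and> ((snd (snd p) = 0 \<and> fst p = 0) \<or> (snd (snd p) \<noteq> 0 \<and> inverse (snd (snd p)) *\<^sub>R fst p \<in> J))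
    \<and> 1 \<ge> snd (snd p) \<and> snd (snd p) \<ge> 0}"
  by (auto simp: N0_def mem_scaled)

lemma S0_meas[measurable]: "S0 \<in> sets borel"
proof -
  have "Measurable.pred (borel \<Otimes>\<^sub>M (borel \<Otimes>\<^sub>M borel)) (\<lambda>p :: (real^'n) \<times> real \<times> real.
      ell (fst p) - ell 0 + snd (snd p) * ell 0 \<ge> fst (snd p)
    \<and> fst (snd p) \<ge> snd (snd p) * fN (inverse (snd (snd p)) *\<^sub>R fst p)
    \<and> inverse (snd (snd p)) *\<^sub>R fst p \<in> J \<and> 1 \<ge> snd (snd p) \<and> snd (snd p) > 0)"
    by measurable
  then have "{p :: (real^'n) \<times> real \<times> real.
      ell (fst p) - ell 0 + snd (snd p) * ell 0 \<ge> fst (snd p)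
    \<and> fst (snd p) \<ge> snd (snd p) * fN (inverse (snd (snd p)) *\<^sub>R fst p)
    \<and> inverse (snd (snd p)) *\<^sub>R fst p \<in> J \<and> 1 \<ge> snd (snd p) \<and> snd (snd p) > 0}
      \<in> sets (borel \<Otimes>\<^sub>M (borel \<Otimes>\<^sub>M borel))"
    unfolding pred_def by (simp add: space_pair_measure)
  then show ?thesis by (simp only: S0_alt homog_def borel_prod)
qed

lemma N0_meas[measurable]: "N0 \<in> sets borel"
proof -
  have "Measurable.pred (borel \<Otimes>\<^sub>M (borel \<Otimes>\<^sub>M borel)) (\<lambda>p :: (real^'n) \<times> real \<times> real.
      ell (fst p) - ell 0 + snd (snd p) * ell 0 \<ge> fst (snd p)
    \<and> fst (snd p) \<ge> fN (fst p)
    \<and> ((snd (snd p) = 0 \<and> fst p = 0) \<or> (snd (snd p) \<noteq> 0 \<and> inverse (snd (snd p)) *\<^sub>R fst p \<in> J))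
    \<and> 1 \<ge> snd (snd p) \<and> snd (snd p) \<ge> 0)"
    by measurable
  then have "{p :: (real^'n) \<times> real \<times> real.
      ell (fst p) - ell 0 + snd (snd p) * ell 0 \<ge> fst (snd p)
    \<and> fst (snd p) \<ge> fN (fst p)
    \<and> ((snd (snd p) = 0 \<and> fst p = 0) \<or> (snd (snd p) \<noteq> 0 \<and> inverse (snd (snd p)) *\<^sub>R fst p \<in> J))
    \<and> 1 \<ge> snd (snd p) \<and> snd (snd p) \<ge> 0}
      \<in> sets (borel \<Otimes>\<^sub>M (borel \<Otimes>\<^sub>M borel))"
    unfolding pred_def by (simp add: space_pair_measure)
  then show ?thesis by (simp only: N0_alt homog_def borel_prod)
qed

lemma closure_S0: "closure S0 \<subseteq> S0 \<union> {p. snd (snd p) = 0}"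
proof
  fix p assume "p \<in> closure S0"
  then obtain q where q: "\<And>n. q n \<in> S0" and lim: "q \<longlonglongrightarrow> p"
    unfolding closure_sequential by blast
  obtain x y z where p: "p = (x, y, z)" by (cases p) auto
  define xs where "xs n = fst (q n)" for n
  define ys where "ys n = fst (snd (q n))" for n
  define zs where "zs n = snd (snd (q n))" for n
  have xs: "xs \<longlonglongrightarrow> x" unfolding xs_def using tendsto_fst[OF lim] p by simp
  have ys: "ys \<longlonglongrightarrow> y" unfolding ys_def using tendsto_fst[OF tendsto_snd[OF lim]] p by simp
  have zs: "zs \<longlonglongrightarrow> z" unfolding zs_def using tendsto_snd[OF tendsto_snd[OF lim]] p by simp
  have qn: "homog ell (xs n) (zs n) \<ge> ys n \<and> ys n \<ge> zs n * fN (inverse (zs n) *\<^sub>R xs n)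
      \<and> inverse (zs n) *\<^sub>R xs n \<in> J \<and> 1 \<ge> zs n \<and> zs n > 0" for n
    using q[of n] unfolding S0_alt xs_def ys_def zs_def by auto
  show "p \<in> S0 \<union> {p. snd (snd p) = 0}"
  proof (cases "z = 0")
    case True then show ?thesis using p by simp
  next
    case False
    have z1: "z \<le> 1" by (rule LIMSEQ_le_const2[OF zs]) (use qn in auto)
    have z0: "0 \<le> z" by (rule LIMSEQ_le_const[OF zs]) (use qn in \<open>auto intro: less_imp_le\<close>)
    have L1: "(\<lambda>n. inverse (zs n) *\<^sub>R xs n) \<longlonglongrightarrow> inverse z *\<^sub>R x"
      by (intro tendsto_intros zs xs False)
    have inJ: "inverse z *\<^sub>R x \<in> J"
      by (rule closed_sequentially[OF compact_imp_closed[OF compact_J] _ L1]) (use qn in auto)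
    have L2: "(\<lambda>n. homog ell (xs n) (zs n)) \<longlonglongrightarrow> homog ell x z"
      unfolding homog_def ell_def lam_def by (intro tendsto_intros xs zs u_nz)
    have L3: "(\<lambda>n. zs n * fN (inverse (zs n) *\<^sub>R xs n)) \<longlonglongrightarrow> z * fN (inverse z *\<^sub>R x)"
      unfolding fN_def by (intro tendsto_intros L1 zs)
    have h1: "y \<le> homog ell x z" by (rule LIMSEQ_le[OF ys L2]) (use qn in auto)
    have h2: "z * fN (inverse z *\<^sub>R x) \<le> y" by (rule LIMSEQ_le[OF L3 ys]) (use qn in auto)
    show ?thesis using h1 h2 inJ z1 z0 False p unfolding S0_alt by auto
  qed
qed

lemma Z_null: "{p :: (real^'n) \<times> real \<times> real. snd (snd p) = 0} \<in> null_sets lborel"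
proof -
  have e: "{p :: (real^'n) \<times> real \<times> real. snd (snd p) = 0} = {p. (0, 0, 1) \<bullet> p = 0}"
    by (auto simp: inner_prod_def)
  have "negligible {p :: (real^'n) \<times> real \<times> real. (0, 0, 1) \<bullet> p = 0}"
    by (rule negligible_hyperplane) (simp add: zero_prod_def)
  then have "{p :: (real^'n) \<times> real \<times> real. (0, 0, 1) \<bullet> p = 0} \<in> null_sets lebesgue"
    by (simp add: negligible_iff_null_sets)
  moreover have "{p :: (real^'n) \<times> real \<times> real. (0, 0, 1) \<bullet> p = 0} \<in> sets lborel" by simp
  ultimately show ?thesis unfolding e by (simp add: null_sets_completion_iff)
qed

lemma emeasure_closure_S0: "emeasure lborel (closure S0) = emeasure lborel S0"
proof -
  have "closure S0 = S0 \<union> (closure S0 \<inter> {p. snd (snd p) = 0})"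
    using closure_S0 closure_subset by blast
  moreover have "closure S0 \<inter> {p. snd (snd p) = 0} \<in> null_sets lborel"
    by (rule null_set_Int1[OF Z_null]) simp
  ultimately show ?thesis
    by (metis emeasure_Un_null_set S0_meas sets_lborel)
qed

end

context S13 begin

lemma slice_S0:
  assumes z: "0 < z" "z \<le> 1"
  shows "emeasure lborel {y. (x, y, z) \<in> S0} =
    indicator J (inverse z *\<^sub>R x) * ennreal (homog ell x z - z * fN (inverse z *\<^sub>R x))"
proof (cases "inverse z *\<^sub>R x \<in> J")
  case True
  then have "{y. (x, y, z) \<in> S0} = {z * fN (inverse z *\<^sub>R x) .. homog ell x z}"
    using z by (auto simp: S0_alt)
  then show ?thesis using True by (simp add: emeasure_Icc_any)
next
  case False
  then have "{y. (x, y, z) \<in> S0} = {}" by (auto simp: S0_alt)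
  then show ?thesis using False by simp
qed

lemma inner_S0:
  "(\<integral>\<^sup>+x. emeasure lborel {y. (x, y, z) \<in> S0} \<partial>lborel) = ennreal (volJ * CP * z ^ (d + 1)) * indicator {0<..1} z"
proof (cases "0 < z \<and> z \<le> 1")
  case True
  then have z: "0 < z" "z \<le> 1" by auto
  have "(\<integral>\<^sup>+x. emeasure lborel {y. (x, y, z) \<in> S0} \<partial>lborel)
      = (\<integral>\<^sup>+x. indicator J (inverse z *\<^sub>R x) * ennreal (homog ell x z - z * fN (inverse z *\<^sub>R x)) \<partial>lborel)"
    using slice_S0[OF z] by simp
  also have "\<dots> = ennreal (z ^ d * (volJ * z * CP))"
  proof (rule xint[where G="\<lambda>x. homog ell x z - z * fN (inverse z *\<^sub>R x)" and g="\<lambda>s. z * hP s"])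
    show "0 < z" by (rule z)
    show "(\<lambda>x. indicator J (inverse z *\<^sub>R x) * ennreal (homog ell x z - z * fN (inverse z *\<^sub>R x))) \<in> borel_measurable borel"
      unfolding homog_def by measurable
    show "indicator J (inverse z *\<^sub>R x) * ennreal (homog ell x z - z * fN (inverse z *\<^sub>R x))
        = indicator ((\<lambda>p. z *\<^sub>R p) ` J) x * ennreal (homog ell x z - z * fN (inverse z *\<^sub>R x))" for x
      using z by (simp add: indicator_def mem_scaled)
    show "homog ell (z *\<^sub>R w) z - z * fN (inverse z *\<^sub>R z *\<^sub>R w) = z * hP (lam w)" if "w \<in> J" for w
      using z by (simp add: homog_ell_scaled fN_def ell_def hP_def cw algebra_simps)
    show "(\<lambda>s. z * hP s) \<in> borel_measurable borel" unfolding hP_def by measurable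
    show "0 \<le> z * hP s" if "s \<in> {0..1}" for s using z that hP_nn by simp
    show "((\<lambda>s. volJ * real d * (1 - s) ^ (d - 1) * (z * hP s)) has_integral volJ * z * CP) {0..1}"
      by (rule IP)
  qed
  also have "\<dots> = ennreal (volJ * CP * z ^ (d + 1)) * indicator {0<..1} z"
    using z by (simp add: algebra_simps)
  finally show ?thesis .
next
  case False
  then have "{y. (x, y, z) \<in> S0} = {}" for x by (auto simp: S0_alt)
  then show ?thesis using False by (simp add: indicator_def)
qed

lemma emeasure_S0: "emeasure lborel S0 = ennreal (volJ * CP / (real d + 2))"
proof -
  have "emeasure lborel S0 = (\<integral>\<^sup>+z. \<integral>\<^sup>+x. emeasure lborel {y. (x, y, z) \<in> S0} \<partial>lborel \<partial>lborel)"
    by (rule emeasure_tonelli3) simp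
  also have "\<dots> = (\<integral>\<^sup>+z. ennreal (volJ * CP * z ^ (d + 1)) * indicator {0<..1} z \<partial>lborel)"
    by (simp add: inner_S0)
  also have "\<dots> = (\<integral>\<^sup>+z. ennreal (volJ * CP * z ^ (d + 1)) * indicator {0..1} z \<partial>lborel)"
    by (rule nn_integral_cong_AE) (use AE_lborel_singleton[of 0] in \<open>eventually_elim, auto simp: indicator_def\<close>)
  also have "\<dots> = ennreal (volJ * CP * (1 / (real (d + 1) + 1)))"
    by (rule nn_integral_has_integral_lebesgue'[OF _ has_integral_mult_right[OF int_pow01]])
       (use volJ_nonneg CP_nn in simp)
  finally show ?thesis by (simp add: field_simps)
qed

lemma slice_N0:
  assumes z: "0 < z" "z \<le> 1"
  shows "emeasure lborel {y. (x, y, z) \<in> N0} =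
    indicator J (inverse z *\<^sub>R x) * ennreal (homog ell x z - fN x)"
proof (cases "inverse z *\<^sub>R x \<in> J")
  case True
  then have "{y. (x, y, z) \<in> N0} = {fN x .. homog ell x z}"
    using z by (auto simp: N0_alt)
  then show ?thesis using True by (simp add: emeasure_Icc_any)
next
  case False
  then have "{y. (x, y, z) \<in> N0} = {}" using z by (auto simp: N0_alt)
  then show ?thesis using False by simp
qed

lemma IN_nn: "0 < z \<Longrightarrow> z \<le> 1 \<Longrightarrow> 0 \<le> IN z"
  by (rule has_integral_nonneg[OF IN_int]) (use gN_nn volJ_nonneg in auto)

lemma inner_N0:
  "(\<integral>\<^sup>+x. emeasure lborel {y. (x, y, z) \<in> N0} \<partial>lborel) = ennreal (HN z) * indicator {0<..1} z"
proof (cases "0 < z \<and> z \<le> 1")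
  case True
  then have z: "0 < z" "z \<le> 1" by auto
  have "(\<integral>\<^sup>+x. emeasure lborel {y. (x, y, z) \<in> N0} \<partial>lborel)
      = (\<integral>\<^sup>+x. indicator J (inverse z *\<^sub>R x) * ennreal (homog ell x z - fN x) \<partial>lborel)"
    using slice_N0[OF z] by simp
  also have "\<dots> = ennreal (z ^ d * IN z)"
  proof (rule xint[where G="\<lambda>x. homog ell x z - fN x" and g="\<lambda>s. gN z s"])
    show "0 < z" by (rule z)
    show "(\<lambda>x. indicator J (inverse z *\<^sub>R x) * ennreal (homog ell x z - fN x)) \<in> borel_measurable borel"
      unfolding homog_def by measurable
    show "indicator J (inverse z *\<^sub>R x) * ennreal (homog ell x z - fN x)
        = indicator ((\<lambda>p. z *\<^sub>R p) ` J) x * ennreal (homog ell x z - fN x)" for x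
      using z by (simp add: indicator_def mem_scaled)
    show "homog ell (z *\<^sub>R w) z - fN (z *\<^sub>R w) = gN z (lam w)" if "w \<in> J" for w
      using z by (simp add: homog_ell_scaled fN_def ell_def gN_def cw inner_scaleR_right algebra_simps)
    show "(\<lambda>s. gN z s) \<in> borel_measurable borel" unfolding gN_def by measurable
    show "0 \<le> gN z s" if "s \<in> {0..1}" for s using z that gN_nn by simp
    show "((\<lambda>s. volJ * real d * (1 - s) ^ (d - 1) * gN z s) has_integral IN z) {0..1}"
      by (rule IN_int) (use z in simp)
  qed
  also have "\<dots> = ennreal (HN z) * indicator {0<..1} z"
    using z HN_eq[of z] by simp
  finally show ?thesis .
next
  case False
  show ?thesis
  proof (cases "z = 0")
    case True
    have "(\<integral>\<^sup>+x. emeasure lborel {y. (x, y, z) \<in> N0} \<partial>lborel) = (\<integral>\<^sup>+x. (0::ennreal) \<partial>(lborel :: (real^'n) measure))"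
    proof (rule nn_integral_cong_AE)
      show "AE x in lborel. emeasure lborel {y. (x, y, z) \<in> N0} = 0"
        using AE_lborel_singleton[of 0]
      proof eventually_elim
        fix x :: "real^'n" assume "x \<noteq> 0"
        then have "{y. (x, y, z) \<in> N0} = {}" using True by (auto simp: N0_alt)
        then show "emeasure lborel {y. (x, y, z) \<in> N0} = 0" by simp
      qed
    qed
    then show ?thesis using True by simp
  next
    case False
    then have "{y. (x, y, z) \<in> N0} = {}" for x using \<open>\<not> (0 < z \<and> z \<le> 1)\<close> by (auto simp: N0_alt)
    then show ?thesis using \<open>\<not> (0 < z \<and> z \<le> 1)\<close> by (simp add: indicator_def)
  qed
qed

definition "VN = volJ * ((exp B - 1) * (1 / (real (d + 1) + 1)) + 1 / (real d + 1)
    + ((exp A - exp B) / (real d + 1)) * (1 / (real (d + 1) + 1))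
    - (fact d / u ^ d) * ((exp A - exp B * Qs d u - u ^ d / (- B) ^ d * (1 - exp B * Qs d (- B))) / A))"

lemma HN_int:
  assumes A0: "A \<noteq> 0" and B0: "B \<noteq> 0"
  shows "(HN has_integral VN) {0..1}"
proof -
  obtain m where m: "d = Suc m" using d_pos by (cases d) auto
  have "((\<lambda>z. volJ * ((exp B - 1) * z ^ (d + 1) + z ^ d + ((exp A - exp B) / (real d + 1)) * z ^ (d + 1)
      - (fact d / u ^ d) * (exp (z * A) - exp (z * B) * Qs d (z * u)))) has_integral VN) {0..1}"
    unfolding VN_def
    by (intro has_integral_mult_right has_integral_diff has_integral_add int_pow01 GI[OF m AB A0 B0])
  then show ?thesis
    by (rule hi_cong) (simp_all add: HN_def algebra_simps)
qed

lemma HN_nn: "0 \<le> z \<Longrightarrow> z \<le> 1 \<Longrightarrow> 0 \<le> HN z"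
proof -
  assume z: "0 \<le> z" "z \<le> 1"
  show ?thesis
  proof (cases "z = 0")
    case True
    obtain m where m: "d = Suc m" using d_pos by (cases d) auto
    have q: "Qs d 0 = 1" using m Qs_0 by simp
    have p: "(0::real) ^ d = 0" "(0::real) ^ (d + 1) = 0" using d_pos by simp_all
    show ?thesis using True by (simp add: HN_def q p)
  next
    case False
    then show ?thesis using z HN_eq[of z] IN_nn[of z] by simp
  qed
qed

lemma emeasure_N0:
  assumes A0: "A \<noteq> 0" and B0: "B \<noteq> 0"
  shows "emeasure lborel N0 = ennreal VN" and "0 \<le> VN"
proof -
  have "emeasure lborel N0 = (\<integral>\<^sup>+z. \<integral>\<^sup>+x. emeasure lborel {y. (x, y, z) \<in> N0} \<partial>lborel \<partial>lborel)"
    by (rule emeasure_tonelli3) simp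
  also have "\<dots> = (\<integral>\<^sup>+z. ennreal (HN z) * indicator {0<..1} z \<partial>lborel)"
    by (simp add: inner_N0)
  also have "\<dots> = (\<integral>\<^sup>+z. ennreal (HN z) * indicator {0..1} z \<partial>lborel)"
    by (rule nn_integral_cong_AE) (use AE_lborel_singleton[of 0] in \<open>eventually_elim, auto simp: indicator_def\<close>)
  also have "\<dots> = ennreal VN"
    by (rule nn_integral_has_integral_lebesgue'[OF _ HN_int[OF A0 B0]]) (use HN_nn in auto)
  finally show "emeasure lborel N0 = ennreal VN" .
  show "0 \<le> VN"
    by (rule has_integral_nonneg[OF HN_int[OF A0 B0]]) (use HN_nn in auto)
qed

end

lemma fact_d2: "(fact (d + 2) :: real) = (real d + 2) * (real d + 1) * fact d"
proof -
  have "d + 2 = Suc (Suc d)" by simp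
  then show ?thesis by (simp only: fact_Suc) (simp add: algebra_simps)
qed

lemma c1: "fact d * V / fact (d + 2) = V / ((real d + 2) * (real d + 1))"
proof -
  have f: "(fact d :: real) \<noteq> 0" by simp
  show ?thesis unfolding fact_d2 using f by simp
qed

lemma algP0:
  fixes V eA eB eu Q U F p q r :: real
  assumes p: "p \<noteq> 0" and q: "q \<noteq> 0" and U: "U \<noteq> 0" and qp: "q = p + 1" and r: "r = p - 1"
  shows "V * (eB + (eA - eB) / p - eB * (F / U * (eu - Q))) / q
    = V / (q * p) * (eA + r * eB) - F * V / q * (eB / U) * (eu - Q)"
  using p q U by (simp add: field_simps) (simp add: r algebra_simps)

lemma algN0:
  fixes V eA eB eu emB Qu QB U W A F p q r :: real
  assumes p: "p \<noteq> 0" and q: "q \<noteq> 0" and U: "U \<noteq> 0" and W: "W \<noteq> 0" and A: "A \<noteq> 0"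
    and qp: "q = p + 1" and r: "r = p - 1"
  shows "V * ((eB - 1) * (1 / q) + 1 / p + ((eA - eB) / p) * (1 / q)
    - (F / U) * ((eB * (eu - Qu) - U / W * (eB * (emB - QB))) / A))
  = V / (q * p) * (eA + r * eB + 1)
     - F * V * (eB / (A * U)) * (eu - Qu)
     + F * V * (eB / (A * W)) * (emB - QB)"
proof -
  have "V * ((eB - 1) * (1 / q) + 1 / p + ((eA - eB) / p) * (1 / q)
    - (F / U) * ((eB * (eu - Qu) - U / W * (eB * (emB - QB))) / A))
    = V * ((eB - 1) * p + q + (eA - eB)) / (q * p) - F * V * (eB / (A * U)) * (eu - Qu)
     + F * V * (eB / (A * W)) * (emB - QB)"
    using p q U W A by (simp add: field_simps)
  also have "(eB - 1) * p + q + (eA - eB) = eA + r * eB + 1"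
    unfolding qp r by (simp add: algebra_simps)
  finally show ?thesis by simp
qed

lemma alg_P:
  fixes V eA eB eu Q u :: real and d :: nat
  assumes u: "u \<noteq> 0"
  shows "V * (eB + (eA - eB) / (real d + 1) - eB * (fact d / u ^ d * (eu - Q))) / (real d + 2)
    = fact d * V / fact (d + 2) * (eA + d * eB) - fact d * V / (d + 2) * (eB / u ^ d) * (eu - Q)"
  unfolding c1 of_nat_add of_nat_numeral
  by (rule algP0) (use u in \<open>simp_all add: add_nonneg_eq_0_iff\<close>)

lemma alg_N:
  fixes V eA eB eu emB Qu QB u A B :: real and d :: nat
  assumes u: "u \<noteq> 0" and A: "A \<noteq> 0" and B: "B \<noteq> 0" and eA: "eA = eB * eu" and emB: "eB * emB = 1"
  shows "V * ((eB - 1) * (1 / (real (d + 1) + 1)) + 1 / (real d + 1)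
    + ((eA - eB) / (real d + 1)) * (1 / (real (d + 1) + 1))
    - (fact d / u ^ d) * ((eA - eB * Qu - u ^ d / (- B) ^ d * (1 - eB * QB)) / A))
  = fact d * V / fact (d + 2) * (eA + d * eB + 1)
     - fact d * V * (eB / (A * u ^ d)) * (eu - Qu)
     + fact d * V * (eB / (A * (- B) ^ d)) * (emB - QB)"
proof -
  have s1: "1 - eB * QB = eB * (emB - QB)" using emB by (simp add: algebra_simps)
  have s2: "eA - eB * Qu = eB * (eu - Qu)" using eA by (simp add: algebra_simps)
  have p3: "real (d + 1) + 1 = real d + 2" by simp
  show ?thesis
    unfolding s1 s2 p3 c1
    by (rule algN0) (use u A B in \<open>simp_all add: add_nonneg_eq_0_iff\<close>)
qed

context S13 begin

lemma mJ: "measure lebesgue (simplex_of v d) = volJ"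
  using J_borel by (simp add: volJ_def J_def[symmetric])

lemma final_P:
  "measure lebesgue (persp_relax fN v d) =
     fact d * measure lebesgue (simplex_of v d) / fact (d + 2) * (exp (c \<bullet> v 0) + d * exp (c \<bullet> v 0 - u))
   - fact d * measure lebesgue (simplex_of v d) / (d + 2) * (exp (c \<bullet> v 0 - u) / u ^ d) * (exp u - (\<Sum>j<d. u ^ j / fact j))"
proof -
  have e1: "persp_relax fN v d = closure S0"
    by (simp add: persp_relax_def interp S0_def J_def)
  have "measure lebesgue (closure S0) = measure lborel (closure S0)"
    by (rule measure_completion) simp
  also have "\<dots> = enn2real (emeasure lborel S0)"
    by (simp add: measure_def emeasure_closure_S0)
  also have "\<dots> = volJ * CP / (real d + 2)"
    using volJ_nonneg CP_nn by (simp add: emeasure_S0)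
  finally have "measure lebesgue (persp_relax fN v d) = volJ * CP / (real d + 2)" using e1 by simp
  then show ?thesis
    unfolding mJ CP_def using alg_P[where V=volJ and eA="exp A" and eB="exp B" and eu="exp u" and Q="Qs d u" and d=d, OF u_nz]
    by (simp add: Qs_def A_def B_def)
qed

lemma final_N:
  assumes A0: "c \<bullet> v 0 \<noteq> 0" and B0: "c \<bullet> v 0 - u \<noteq> 0"
  shows "measure lebesgue (naive_relax fN v d) =
           fact d * measure lebesgue (simplex_of v d) / fact (d + 2)
             * (exp (c \<bullet> v 0) + d * exp (c \<bullet> v 0 - u) + 1)
         - fact d * measure lebesgue (simplex_of v d)
             * (exp (c \<bullet> v 0 - u) / ((c \<bullet> v 0) * u ^ d)) * (exp u - (\<Sum>j<d. u ^ j / fact j))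
         + fact d * measure lebesgue (simplex_of v d)
             * (exp (c \<bullet> v 0 - u) / ((c \<bullet> v 0) * (- (c \<bullet> v 0 - u)) ^ d))
             * (exp (- (c \<bullet> v 0 - u)) - (\<Sum>j<d. (- (c \<bullet> v 0 - u)) ^ j / fact j))"
proof -
  have A0': "A \<noteq> 0" and B0': "B \<noteq> 0" using A0 B0 by (simp_all add: A_def B_def)
  have e1: "naive_relax fN v d = N0"
    by (simp add: naive_relax_def interp N0_def J_def)
  have "measure lebesgue N0 = measure lborel N0"
    by (rule measure_completion) simp
  also have "\<dots> = VN"
    using emeasure_N0[OF A0' B0'] by (simp add: measure_def)
  finally have "measure lebesgue (naive_relax fN v d) = VN" using e1 by simp
  moreover have "exp A = exp B * exp u" by (simp add: AB exp_add)
  moreover have "exp B * exp (- B) = 1" by (simp add: exp_minus)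
  ultimately show ?thesis
    unfolding mJ VN_def
    using alg_N[where eA="exp A" and eB="exp B" and eu="exp u" and emB="exp (- B)" and V=volJ and Qu="Qs d u" and QB="Qs d (- B)" and d=d, OF u_nz A0' B0']
    by (simp add: Qs_def A_def B_def)
qed

end

theorem theorem13:
  fixes v :: "nat \<Rightarrow> real^'n" and c :: "real^'n" and u :: real
    and f :: "real^'n \<Rightarrow> real" and d :: nat
  assumes d_def: "d = CARD('n)"
    and inj: "inj_on v {0..d}"
    and indep: "\<not> affine_dependent (v ` {0..d})"
    and orthant: "simplex_of v d \<subseteq> {x. \<forall>k. 0 \<le> x $ k} - {0}"
    and f_def: "f = (\<lambda>x. exp (c \<bullet> x) - 1)"
    and u_def: "\<forall>j\<in>{1..d}. c \<bullet> v 0 - c \<bullet> v j = u"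
    and u_nz: "u \<noteq> 0"
  shows "(measure lebesgue (persp_relax f v d) =
           fact d * measure lebesgue (simplex_of v d) / fact (d + 2)
             * (exp (c \<bullet> v 0) + d * exp (c \<bullet> v 0 - u))
         - fact d * measure lebesgue (simplex_of v d) / (d + 2)
             * (exp (c \<bullet> v 0 - u) / u ^ d) * (exp u - (\<Sum>j<d. u ^ j / fact j)))
    \<and> (c \<bullet> v 0 \<noteq> 0 \<longrightarrow> c \<bullet> v 0 - u \<noteq> 0 \<longrightarrow>
        
         measure lebesgue (naive_relax f v d) =
           fact d * measure lebesgue (simplex_of v d) / fact (d + 2)
             * (exp (c \<bullet> v 0) + d * exp (c \<bullet> v 0 - u) + 1)
         - fact d * measure lebesgue (simplex_of v d)
             * (exp (c \<bullet> v 0 - u) / ((c \<bullet> v 0) * u ^ d)) * (exp u - (\<Sum>j<d. u ^ j / fact j))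
         + fact d * measure lebesgue (simplex_of v d)
             * (exp (c \<bullet> v 0 - u) / ((c \<bullet> v 0) * (- (c \<bullet> v 0 - u)) ^ d))
             * (exp (- (c \<bullet> v 0 - u)) - (\<Sum>j<d. (- (c \<bullet> v 0 - u)) ^ j / fact j)))"
proof -
  interpret S: S13 v c u d
    by (rule S13.intro) (fact d_def inj indep u_def u_nz)+
  have f: "f = S.fN" using f_def by (simp add: fun_eq_iff S.fN_def)
  show ?thesis
    unfolding f using S.final_P S.final_N by blast
qed


end
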